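(* Let $z_0\in\mathbb{Z}_{\ge0}$, $z\in\mathbb{Z}_{>0}$, and $x,y\in[0,1)$ with $x<y$. Then $$\left|\frac{\big|\Phi[z_0,z_0+z)\cap[x,y)\big|}{z}-(y-x)\right|<\frac{2\lfloor\lg z\rfloor+2}{z}.$$
   Context: $\lg=\log_2$. The van der Corput function $\psi:\mathbb{Z}_{\ge0}\to[0,1)$ is $\psi(0)=0$ and, for $i>0$ written in binary as $i=\sum_{j=0}^{\lfloor\lg i\rfloor}\beta_j(i)2^j$ with $\beta_j(i)\in\{0,1\}$, $\psi(i)=\sum_{j}\beta_j(i)2^{-(j+1)}$. For integers $0\le z<z'$, $\Phi[z,z')=\{\psi(i): i\in\{z,z+1,\dots,z'-1\}\}$. *)

theory Defs
  imports Complex_Main "HOL-Library.Discrete_Functions"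
begin

definition beta :: "nat \<Rightarrow> nat \<Rightarrow> nat" where
  "beta j i = (i div 2 ^ j) mod 2"

text \<open>van der Corput function; psi 0 = 0 since all digits of 0 vanish\<close>
definition vdc :: "nat \<Rightarrow> real" where
  "vdc i = (if i = 0 then 0 else
     (\<Sum>j\<in>{0..floor_log i}. real (beta j i) / 2 ^ (j + 1)))"

definition Phi :: "nat \<Rightarrow> nat \<Rightarrow> real set" where
  "Phi z z' = vdc ` {z..<z'}"

end

theory Submission
  imports Defs
begin


fun rv :: "nat \<Rightarrow> nat \<Rightarrow> nat" where
  "rv 0 i = 0"
| "rv (Suc N) i = (i mod 2) * 2^N + rv N (i div 2)"

lemma rv_less: "rv N i < 2^N"
proof (induction N arbitrary: i)
  case 0 then show ?case by simp
next
  case (Suc N)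
  have "i mod 2 \<le> 1" by simp
  then have "(i mod 2) * 2^N \<le> 2^N" by simp
  have "i mod 2 = 0 \<or> i mod 2 = 1" by auto
  with Suc[of "i div 2"] show ?case by auto
qed

lemma rv_inj: "i < 2^N \<Longrightarrow> j < 2^N \<Longrightarrow> rv N i = rv N j \<Longrightarrow> i = j"
proof (induction N arbitrary: i j)
  case 0 then show ?case by simp
next
  case (Suc N)
  have a: "rv N (i div 2) < 2^N" "rv N (j div 2) < 2^N" by (rule rv_less)+
  have m: "i mod 2 = j mod 2"
  proof (rule ccontr)
    assume "i mod 2 \<noteq> j mod 2"
    then have "i mod 2 = 0 \<and> j mod 2 = 1 \<or> i mod 2 = 1 \<and> j mod 2 = 0" by auto
    then show False using Suc.prems(3) a by auto
  qed
  then have "rv N (i div 2) = rv N (j div 2)" using Suc.prems(3) by simp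
  moreover have "i div 2 < 2^N" "j div 2 < 2^N" using Suc.prems(1,2) by auto
  ultimately have "i div 2 = j div 2" using Suc.IH by blast
  with m show ?case by (metis div_mult_mod_eq)
qed

definition S :: "nat \<Rightarrow> nat \<Rightarrow> real" where
  "S N i = (\<Sum>j<N. real (beta j i) / 2^(j+1))"

lemma beta_Suc: "beta (Suc j) i = beta j (i div 2)"
  by (simp add: beta_def div_mult2_eq)

lemma S_rv: "S N i = rv N i / 2^N"
proof (induction N arbitrary: i)
  case 0 then show ?case by (simp add: S_def)
next
  case (Suc N)
  have "S (Suc N) i = real (beta 0 i) / 2 + (\<Sum>j<N. real (beta (Suc j) i) / 2^(Suc j+1))"
    unfolding S_def by (subst sum.lessThan_Suc_shift) simp
  also have "\<dots> = real (i mod 2) / 2 + S N (i div 2) / 2"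
    unfolding S_def beta_Suc by (simp add: beta_def sum_divide_distrib)
  also have "\<dots> = rv (Suc N) i / 2^(Suc N)"
    using Suc[of "i div 2"] by (simp add: field_simps)
  finally show ?case .
qed

lemma vdc_S: assumes "i < 2^N" shows "vdc i = S N i"
proof (cases "i = 0")
  case True then show ?thesis by (simp add: vdc_def S_def beta_def)
next
  case False
  let ?L = "floor_log i"
  have "2^?L \<le> i" using False floor_log_exp2_le by auto
  then have "2^?L < (2::nat)^N" using assms by linarith
  then have LN: "?L < N" by simp
  have z: "beta j i = 0" if "j \<ge> Suc ?L" for j
  proof -
    have "i < 2 * 2^?L" by (rule floor_log_exp2_gt)
    also have "\<dots> \<le> 2^j" using that by (metis power_Suc power_increasing_iff one_less_numeral_iff semiring_norm(76) less_imp_le)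
    finally show ?thesis by (simp add: beta_def)
  qed
  have U: "{..<N} = {0..?L} \<union> {Suc ?L..<N}" using LN by auto
  have "S N i = (\<Sum>j\<in>{0..?L} \<union> {Suc ?L..<N}. real (beta j i) / 2^(j+1))"
    unfolding S_def U ..
  also have "\<dots> = (\<Sum>j\<in>{0..?L}. real (beta j i) / 2^(j+1)) + (\<Sum>j\<in>{Suc ?L..<N}. real (beta j i) / 2^(j+1))"
    by (rule sum.union_disjoint) auto
  also have "(\<Sum>j\<in>{Suc ?L..<N}. real (beta j i) / 2^(j+1)) = 0" using z by simp
  finally show ?thesis using False by (simp add: vdc_def)
qed

lemma vdc_rv: "i < 2^N \<Longrightarrow> vdc i = rv N i / 2^N"
  using vdc_S S_rv by simp

lemma vdc_inj: "inj vdc"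
proof (rule injI)
  fix i j assume h: "vdc i = vdc j"
  have "i < 2^(i+j)" "j < 2^(i+j)" 
    by (metis add.commute less_exp less_le_trans one_less_numeral_iff power_increasing_iff semiring_norm(76) le_add1 less_imp_le)+
  then show "i = j" using h vdc_rv[of i "i+j"] vdc_rv[of j "i+j"] rv_inj by auto
qed

lemma vdc_bounds: "0 \<le> vdc i" "vdc i < 1"
proof -
  have "i < 2^i" by simp
  then have e: "vdc i = rv i i / 2^i" by (rule vdc_rv)
  show "0 \<le> vdc i" unfolding e by simp
  have "real (rv i i) < 2^i" using rv_less[of i i] by (metis of_nat_less_iff of_nat_numeral of_nat_power)
  then show "vdc i < 1" unfolding e by simp
qed

lemma rv_block: "r < 2^k \<Longrightarrow> rv (k+K) (a*2^k + r) = rv k r * 2^K + rv K a"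
proof (induction k arbitrary: r)
  case 0 then show ?case by simp
next
  case (Suc k)
  have e: "a*2^Suc k + r = r + 2*(a*2^k)" by simp
  have m: "(a*2^Suc k + r) mod 2 = r mod 2" unfolding e by simp
  have d: "(a*2^Suc k + r) div 2 = a*2^k + r div 2" by simp
  have "r div 2 < 2^k" using Suc.prems by auto
  then show ?case using Suc.IH[of "r div 2"] m d by (simp add: algebra_simps power_add)
qed

lemma vdc_block: assumes "r < 2^k" shows "vdc (a*2^k + r) = rv k r / 2^k + vdc a / 2^k"
proof -
  have a: "a < 2^a" by simp
  have "a*2^k + r < 2^(k+a)"
  proof -
    have "a*2^k + r < a*2^k + 2^k" using assms by simp
    also have "\<dots> = (a+1)*2^k" by simp
    also have "\<dots> \<le> 2^a*2^k" proof (rule mult_right_mono)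
      show "a+1 \<le> 2^a" using a by linarith
    qed simp
    finally show ?thesis by (simp add: power_add mult.commute)
  qed
  then have "vdc (a*2^k + r) = rv (k+a) (a*2^k + r) / 2^(k+a)" by (rule vdc_rv)
  also have "\<dots> = (rv k r * 2^a + rv a a) / 2^(k+a)" using rv_block[OF assms] by simp
  also have "\<dots> = rv k r / 2^k + (rv a a / 2^a) / 2^k" by (simp add: field_simps power_add)
  also have "rv a a / 2^a = vdc a" using vdc_rv[OF a] by simp
  finally show ?thesis .
qed



definition cnt :: "real \<Rightarrow> real \<Rightarrow> nat \<Rightarrow> nat \<Rightarrow> nat" where
  "cnt x y b n = card {i \<in> {b..<b+n}. x \<le> vdc i \<and> vdc i < y}"

definition Err :: "real \<Rightarrow> real \<Rightarrow> nat \<Rightarrow> nat \<Rightarrow> real" where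
  "Err x y b n = real (cnt x y b n) - real n * (y - x)"

lemma cnt_add: "cnt x y b (n+m) = cnt x y b n + cnt x y (b+n) m"
proof -
  have "{i \<in> {b..<b+(n+m)}. x \<le> vdc i \<and> vdc i < y} =
        {i \<in> {b..<b+n}. x \<le> vdc i \<and> vdc i < y} \<union> {i \<in> {b+n..<b+n+m}. x \<le> vdc i \<and> vdc i < y}"
    by auto
  moreover have "card ({i \<in> {b..<b+n}. x \<le> vdc i \<and> vdc i < y} \<union> {i \<in> {b+n..<b+n+m}. x \<le> vdc i \<and> vdc i < y})
     = card {i \<in> {b..<b+n}. x \<le> vdc i \<and> vdc i < y} + card {i \<in> {b+n..<b+n+m}. x \<le> vdc i \<and> vdc i < y}"
  proof (rule card_Un_disjoint)
    show "finite {i \<in> {b..<b+n}. x \<le> vdc i \<and> vdc i < y}" by (rule finite_subset[of _ "{b..<b+n}"]) auto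
    show "finite {i \<in> {b+n..<b+n+m}. x \<le> vdc i \<and> vdc i < y}" by (rule finite_subset[of _ "{b+n..<b+n+m}"]) auto
  qed auto
  ultimately show ?thesis unfolding cnt_def by (simp add: add.assoc)
qed

lemma Err_add: "Err x y b (n+m) = Err x y b n + Err x y (b+n) m"
  unfolding Err_def cnt_add by (simp add: algebra_simps)

lemma rv_surj: "rv k ` {..<2^k} = {..<2^k}"
proof (rule card_subset_eq)
  show "rv k ` {..<2^k} \<subseteq> {..<2^k}" using rv_less by auto
  have "inj_on (rv k) {..<2^k}" by (rule inj_onI) (use rv_inj in auto)
  then show "card (rv k ` {..<2^k}) = card {..<(2::nat)^k}" by (simp add: card_image)
qed simp

lemma ceil_count:
  fixes A B :: real
  assumes "A > -1" "A \<le> B"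
  shows "card {m::nat. A \<le> real m \<and> real m < B} = nat \<lceil>B\<rceil> - nat \<lceil>A\<rceil>"
    and "\<lceil>A\<rceil> \<ge> 0" "\<lceil>A\<rceil> \<le> \<lceil>B\<rceil>"
proof -
  show A0: "\<lceil>A\<rceil> \<ge> 0" using assms by linarith
  show "\<lceil>A\<rceil> \<le> \<lceil>B\<rceil>" using assms by (simp add: ceiling_mono)
  have "{m::nat. A \<le> real m \<and> real m < B} = {nat \<lceil>A\<rceil>..<nat \<lceil>B\<rceil>}"
  proof (rule set_eqI)
    fix m :: nat
    have "A \<le> real m \<longleftrightarrow> \<lceil>A\<rceil> \<le> int m" by (simp add: ceiling_le_iff)
    moreover have "real m < B \<longleftrightarrow> int m < \<lceil>B\<rceil>" by (simp add: less_ceiling_iff)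
    ultimately show "m \<in> {m::nat. A \<le> real m \<and> real m < B} \<longleftrightarrow> m \<in> {nat \<lceil>A\<rceil>..<nat \<lceil>B\<rceil>}"
      using A0 by auto
  qed
  then show "card {m::nat. A \<le> real m \<and> real m < B} = nat \<lceil>B\<rceil> - nat \<lceil>A\<rceil>" by simp
qed

lemma Err_aligned:
  assumes "0 \<le> x" "x < y" "y < 1" "2^k dvd b"
  shows "\<bar>Err x y b (2^k)\<bar> \<le> 1"
proof -
  obtain a where b: "b = a * 2^k" using assms(4) by (auto elim!: dvdE simp: mult.commute)
  define N :: nat where "N = 2^k"
  have Npos: "(0::real) < N" unfolding N_def by simp
  define c where "c = vdc a"
  have c: "0 \<le> c" "c < 1" unfolding c_def by (rule vdc_bounds)+
  define Q where "Q = (\<lambda>m::nat. x \<le> real m / N + c / N \<and> real m / N + c / N < y)"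
  have "{i \<in> {b..<b+N}. x \<le> vdc i \<and> vdc i < y} = (\<lambda>r. b + r) ` {r \<in> {..<N}. Q (rv k r)}"
  proof (rule set_eqI)
    fix i
    show "i \<in> {i \<in> {b..<b+N}. x \<le> vdc i \<and> vdc i < y} \<longleftrightarrow> i \<in> (\<lambda>r. b + r) ` {r \<in> {..<N}. Q (rv k r)}"
    proof
      assume h: "i \<in> {i \<in> {b..<b+N}. x \<le> vdc i \<and> vdc i < y}"
      define r where "r = i - b"
      have r: "r < 2^k" "i = a*2^k + r" using h unfolding r_def N_def b by auto
      have "vdc i = rv k r / N + c / N" unfolding r(2) vdc_block[OF r(1)] N_def c_def by simp
      then show "i \<in> (\<lambda>r. b + r) ` {r \<in> {..<N}. Q (rv k r)}" using h r unfolding Q_def N_def b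
        by (intro image_eqI[of _ _ r]) auto
    next
      assume "i \<in> (\<lambda>r. b + r) ` {r \<in> {..<N}. Q (rv k r)}"
      then obtain r where r: "r < 2^k" "i = a*2^k + r" "Q (rv k r)" unfolding N_def b by auto
      have "vdc i = rv k r / N + c / N" unfolding r(2) vdc_block[OF r(1)] N_def c_def by simp
      then show "i \<in> {i \<in> {b..<b+N}. x \<le> vdc i \<and> vdc i < y}" using r unfolding Q_def N_def b by auto
    qed
  qed
  then have "cnt x y b N = card {r \<in> {..<N}. Q (rv k r)}"
    unfolding cnt_def by (simp add: card_image)
  also have "\<dots> = card (rv k ` {r \<in> {..<N}. Q (rv k r)})"
  proof -
    have "inj_on (rv k) {..<N}" unfolding N_def by (rule inj_onI) (use rv_inj in auto)
    then have "inj_on (rv k) {r \<in> {..<N}. Q (rv k r)}" by (rule inj_on_subset) auto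
    then show ?thesis by (simp add: card_image)
  qed
  also have "rv k ` {r \<in> {..<N}. Q (rv k r)} = {m \<in> rv k ` {..<N}. Q m}" by auto
  also have "\<dots> = {m. m < N \<and> Q m}" unfolding N_def rv_surj by auto
  also have "{m. m < N \<and> Q m} = {m::nat. N*x - c \<le> real m \<and> real m < N*y - c}"
  proof -
    have "Q m \<longleftrightarrow> N*x - c \<le> real m \<and> real m < N*y - c" for m
      unfolding Q_def using Npos by (simp add: field_simps)
    moreover have "real m < N*y - c \<Longrightarrow> m < N" for m
    proof -
      assume "real m < N*y - c"
      also have "\<dots> < N"
      proof -
        have "real N*y < real N*1" using assms Npos by (intro mult_strict_left_mono) auto
        then show ?thesis using c by simp
      qed
      finally show "m < N" by simp
    qed
    ultimately show ?thesis by auto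
  qed
  finally have C: "cnt x y b N = card {m::nat. N*x - c \<le> real m \<and> real m < N*y - c}" .
  define A where "A = N*x - c"
  define B where "B = N*y - c"
  have x0: "0 \<le> N*x" using Npos assms by simp
  have xy: "N*x \<le> N*y" using Npos assms by (intro mult_left_mono) auto
  have AB: "A > -1" "A \<le> B" unfolding A_def B_def using x0 xy c by linarith+
  note cc = ceil_count[OF AB]
  have "real (cnt x y b N) = real_of_int \<lceil>B\<rceil> - real_of_int \<lceil>A\<rceil>"
  proof -
    have c1: "cnt x y b N = nat \<lceil>B\<rceil> - nat \<lceil>A\<rceil>" using C cc(1) unfolding A_def[symmetric] B_def[symmetric] by simp
    have "nat \<lceil>A\<rceil> \<le> nat \<lceil>B\<rceil>" by (rule nat_mono[OF cc(3)])
    then have "real (cnt x y b N) = real (nat \<lceil>B\<rceil>) - real (nat \<lceil>A\<rceil>)" unfolding c1 by (simp add: of_nat_diff)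
    moreover have a0: "0 \<le> \<lceil>A\<rceil>" by (rule cc(2))
    moreover have b0: "0 \<le> \<lceil>B\<rceil>" using cc(2,3) by linarith
    ultimately show ?thesis by (simp only: of_nat_nat)
  qed
  moreover have "real N * (y - x) = B - A" unfolding A_def B_def by (simp add: algebra_simps)
  moreover have "A \<le> \<lceil>A\<rceil>" "\<lceil>A\<rceil> < A + 1" "B \<le> \<lceil>B\<rceil>" "\<lceil>B\<rceil> < B + 1" by linarith+
  ultimately have "\<bar>Err x y b N\<bar> < 1" unfolding Err_def by linarith
  then show ?thesis unfolding N_def by simp
qed



lemma Err_zero: "Err x y b 0 = 0" by (simp add: Err_def cnt_def)

lemma Err_prefix:
  assumes "0 \<le> x" "x < y" "y < 1"
  shows "2^k dvd b \<Longrightarrow> n < 2^k \<Longrightarrow> \<bar>Err x y b n\<bar> \<le> k"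
proof (induction k arbitrary: b n)
  case 0 then show ?case by (simp add: Err_zero)
next
  case (Suc k)
  have d: "2^k dvd b" by (rule dvd_trans[OF _ Suc.prems(1)]) (simp add: le_imp_power_dvd)
  show ?case
  proof (cases "n < 2^k")
    case True
    have "\<bar>Err x y b n\<bar> \<le> k" by (rule Suc.IH[OF d True])
    then show ?thesis by simp
  next
    case False
    define n' where "n' = n - 2^k"
    have n: "n = 2^k + n'" "n' < 2^k" using False Suc.prems(2) unfolding n'_def by auto
    have d2: "2^k dvd b + 2^k" using d by simp
    have "\<bar>Err x y b n\<bar> \<le> \<bar>Err x y b (2^k)\<bar> + \<bar>Err x y (b+2^k) n'\<bar>"
      unfolding n(1) Err_add by linarith
    also have "\<dots> \<le> 1 + k" using Err_aligned[OF assms d] Suc.IH[OF d2 n(2)] by linarith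
    finally show ?thesis by simp
  qed
qed

lemma Err_suffix:
  assumes "0 \<le> x" "x < y" "y < 1"
  shows "2^k dvd e \<Longrightarrow> n < 2^k \<Longrightarrow> n \<le> e \<Longrightarrow> \<bar>Err x y (e - n) n\<bar> \<le> k"
proof (induction k arbitrary: e n)
  case 0 then show ?case by (simp add: Err_zero)
next
  case (Suc k)
  have d: "2^k dvd e" by (rule dvd_trans[OF _ Suc.prems(1)]) (simp add: le_imp_power_dvd)
  show ?case
  proof (cases "n < 2^k")
    case True then show ?thesis using Suc.IH[OF d True Suc.prems(3)] by simp
  next
    case False
    define n' where "n' = n - 2^k"
    define e' where "e' = e - 2^k"
    have n: "n = n' + 2^k" "n' < 2^k" using False Suc.prems(2) unfolding n'_def by auto
    have e: "e = e' + 2^k" "n' \<le> e'" using False Suc.prems(3) unfolding n'_def e'_def by auto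
    have d2: "2^k dvd e'" unfolding e'_def using d by (simp add: dvd_diff_nat)
    have en: "e - n = e' - n'" "e' - n' + n' = e'" using e n by auto
    have "Err x y (e - n) n = Err x y (e'-n') (n' + 2^k)" using en(1) n(1) by simp
    also have "\<dots> = Err x y (e'-n') n' + Err x y e' (2^k)" by (simp only: Err_add en(2))
    finally have "\<bar>Err x y (e - n) n\<bar> \<le> \<bar>Err x y (e'-n') n'\<bar> + \<bar>Err x y e' (2^k)\<bar>"
      by linarith
    also have "\<dots> \<le> k + 1" using Err_aligned[OF assms d2] Suc.IH[OF d2 n(2) e(2)] by linarith
    finally show ?thesis by simp
  qed
qed

lemma Err_main:
  assumes "0 \<le> x" "x < y" "y < 1" "z > 0"
  shows "\<bar>Err x y z0 z\<bar> \<le> 2 * floor_log z + 1"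
proof -
  define k where "k = floor_log z"
  have z1: "2^k \<le> z" unfolding k_def using assms(4) by (rule floor_log_exp2_le)
  have z2: "z < 2 * 2^k" unfolding k_def by (rule floor_log_exp2_gt)
  define s where "s = (2^k - z0 mod 2^k) mod 2^k"
  have s: "s < 2^k" unfolding s_def by simp
  have sd: "2^k dvd z0 + s"
  proof (cases "z0 mod 2^k = 0")
    case True then show ?thesis unfolding s_def by auto
  next
    case False
    then have "s = 2^k - z0 mod 2^k" unfolding s_def
      by (simp add: mod_less)
    moreover have "z0 mod 2^k < 2^k" by simp
    moreover have "z0 = (z0 div 2^k) * 2^k + z0 mod 2^k" by (rule div_mult_mod_eq[symmetric])
    ultimately have "z0 + s = (z0 div 2^k) * 2^k + 2^k" by linarith
    also have "\<dots> = (z0 div 2^k + 1) * 2^k" by simp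
    finally have "z0 + s = (z0 div 2^k + 1) * 2^k" .
    then show ?thesis by simp
  qed
  define d where "d = z - s"
  have zd: "z = s + d" using s z1 unfolding d_def by auto
  have "\<bar>Err x y z0 z\<bar> \<le> \<bar>Err x y z0 s\<bar> + \<bar>Err x y (z0+s) d\<bar>"
    unfolding zd Err_add by linarith
  moreover have "\<bar>Err x y z0 s\<bar> \<le> k"
    using Err_suffix[OF assms(1-3) sd s] by simp
  moreover have "\<bar>Err x y (z0+s) d\<bar> \<le> k + 1"
  proof (cases "d < 2^k")
    case True then show ?thesis using Err_prefix[OF assms(1-3) sd True] by simp
  next
    case False
    define d' where "d' = d - 2^k"
    have dd: "d = 2^k + d'" "d' < 2^k" using False zd z2 unfolding d'_def by auto
    have sd2: "2^k dvd z0 + s + 2^k" using sd by simp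
    have "\<bar>Err x y (z0+s) d\<bar> \<le> \<bar>Err x y (z0+s) (2^k)\<bar> + \<bar>Err x y (z0+s+2^k) d'\<bar>"
      unfolding dd(1) Err_add by linarith
    then show ?thesis using Err_aligned[OF assms(1-3) sd] Err_prefix[OF assms(1-3) sd2 dd(2)] by linarith
  qed
  ultimately show ?thesis unfolding k_def by linarith
qed

theorem lemmaB5:
  fixes z0 z :: nat and x y :: real
  assumes "z > 0" and "0 \<le> x" and "x < y" and "y < 1"
  shows "\<bar>real (card (Phi z0 (z0 + z) \<inter> {x..<y})) / real z - (y - x)\<bar>
           < (2 * real_of_int \<lfloor>log 2 (real z)\<rfloor> + 2) / real z"
proof -
  have "Phi z0 (z0 + z) \<inter> {x..<y} = vdc ` {i \<in> {z0..<z0+z}. x \<le> vdc i \<and> vdc i < y}"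
    unfolding Phi_def by auto
  then have c: "card (Phi z0 (z0 + z) \<inter> {x..<y}) = cnt x y z0 z"
    unfolding cnt_def using vdc_inj by (simp add: card_image inj_on_subset)
  have zp: "real z > 0" using assms by simp
  have l: "real_of_int \<lfloor>log 2 (real z)\<rfloor> = real (floor_log z)"
  proof -
    have "floor_log z = nat \<lfloor>log 2 (real z)\<rfloor>" using assms by (simp add: floor_log_altdef)
    moreover have "\<lfloor>log 2 (real z)\<rfloor> \<ge> 0" using assms by simp
    ultimately show ?thesis by simp
  qed
  have "real (card (Phi z0 (z0 + z) \<inter> {x..<y})) / real z - (y - x) = Err x y z0 z / real z"
    unfolding c Err_def using zp by (simp add: field_simps)
  then have "\<bar>real (card (Phi z0 (z0 + z) \<inter> {x..<y})) / real z - (y - x)\<bar> = \<bar>Err x y z0 z\<bar> / real z"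
    using zp by simp
  also have "\<dots> < (2 * real (floor_log z) + 2) / real z"
    using Err_main[OF assms(2-4) assms(1), of z0] zp by (intro divide_strict_right_mono) auto
  finally show ?thesis unfolding l .
qed

end
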